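(* Let $\mathbb{X},\mathbb{Y}$ be real normed linear spaces and let $F$ be a $k$-face of $B_{\mathbb{X}}$ for some $k\in\mathbb{N}$. If $T\in\mathbb{L}(\mathbb{X},\mathbb{Y})$ preserves TEA pairs contained in $F$ (i.e. for all $x,y\in F$, $(Tx,Ty)$ is a TEA pair in $\mathbb{Y}$), then either $T(F)=\{0\}$ or $\mathrm{Int}_r F\cap\ker T=\emptyset$.
   Context: A face of $B_{\mathbb{X}}$ is a nonempty convex subset $F\subset S_{\mathbb{X}}$ such that whenever $x_1,x_2\in S_{\mathbb{X}}$, $0<t<1$ and $(1-t)x_1+tx_2\in F$, then $x_1,x_2\in F$. $\mathrm{aff}(U)$ is the affine hull of $U$ and $\mathrm{Int}_r U=\{x\in U: \exists\varepsilon>0,\ \mathrm{aff}(U)\cap B(x,\varepsilon)\subset U\}$ is the relative interior. A $k$-face is a face whose affine hull has dimension $k$. $(x,y)$ is a TEA pair if $\|x+y\|=\|x\|+\|y\|$. *)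

theory Defs
  imports "HOL-Analysis.Analysis"
begin

definition face_of_ball :: "'a::real_normed_vector set \<Rightarrow> bool" where
  "face_of_ball F \<longleftrightarrow> F \<noteq> {} \<and> convex F \<and> F \<subseteq> sphere 0 1 \<and>
     (\<forall>x1\<in>sphere 0 1. \<forall>x2\<in>sphere 0 1. \<forall>t::real.
        0 < t \<and> t < 1 \<and> (1 - t) *\<^sub>R x1 + t *\<^sub>R x2 \<in> F \<longrightarrow> x1 \<in> F \<and> x2 \<in> F)"

text \<open>The affine hull of U has (finite) dimension k: for a point a of U, the linear space
  spanned by U - a (the direction space of aff U) has a basis with k elements.\<close>
definition aff_hull_dim :: "'a::real_vector set \<Rightarrow> nat \<Rightarrow> bool" where
  "aff_hull_dim U k \<longleftrightarrow> (\<exists>a\<in>U. \<exists>B. finite B \<and> independent B \<and> card B = k \<and>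
       span B = span ((\<lambda>x. x - a) ` U))"

definition k_face_of_ball :: "nat \<Rightarrow> 'a::real_normed_vector set \<Rightarrow> bool" where
  "k_face_of_ball k F \<longleftrightarrow> face_of_ball F \<and> aff_hull_dim F k"

definition rel_int :: "'a::real_normed_vector set \<Rightarrow> 'a set" where
  "rel_int U = {x \<in> U. \<exists>e>0. affine hull U \<inter> ball x e \<subseteq> U}"

definition TEA_pair :: "'a::real_normed_vector \<Rightarrow> 'a \<Rightarrow> bool" where
  "TEA_pair x y \<longleftrightarrow> norm (x + y) = norm x + norm y"

end

theory Submission
  imports Defs
begin

theorem mainTheorem10:
  fixes T :: "'a::real_normed_vector \<Rightarrow> 'b::real_normed_vector"
    and F :: "'a set" and k :: nat
  assumes "k_face_of_ball k F"
    and "bounded_linear T"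
    and "\<forall>x\<in>F. \<forall>y\<in>F. TEA_pair (T x) (T y)"
  shows "T ` F = {0} \<or> rel_int F \<inter> {x. T x = 0} = {}"
proof (rule ccontr)
  assume H: "\<not> ?thesis"
  then obtain z where zr: "z \<in> rel_int F" and Tz: "T z = 0" by auto
  from zr have zF: "z \<in> F" and "\<exists>e>0. affine hull F \<inter> ball z e \<subseteq> F"
    unfolding rel_int_def by auto
  then obtain e where e: "e > 0" "affine hull F \<inter> ball z e \<subseteq> F" by auto
  from H zF Tz have "\<exists>y\<in>F. T y \<noteq> 0" by auto
  then obtain y where yF: "y \<in> F" and Ty: "T y \<noteq> 0" by auto
  interpret L: bounded_linear T by fact
  define d where "d = min (1/2) (e / (2 * (norm (z - y) + 1)))"
  have "2 * (norm (z - y) + 1) > 0" by (simp add: add_nonneg_pos)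
  hence d0: "d > 0" using e by (simp add: d_def del: distrib_left_numeral)
  have d1: "d < 1" by (simp add: d_def)
  have dn: "d * norm (z - y) < e"
  proof -
    have "d * norm (z - y) \<le> (e / (2 * (norm (z - y) + 1))) * (norm (z - y) + 1)"
      using d0 by (intro mult_mono) (auto simp: d_def)
    also have "\<dots> = e / 2"
    proof -
      have "norm (z - y) + 1 > 0" by (simp add: add_nonneg_pos)
      thus ?thesis by (simp add: field_simps)
    qed
    finally show ?thesis using e by linarith
  qed
  define w where "w = (1 + d) *\<^sub>R z - d *\<^sub>R y"
  have "w \<in> affine hull F"
  proof -
    have zA: "z \<in> affine hull F" and yA: "y \<in> affine hull F"
      using zF yF by (auto intro: hull_inc)
    have "\<And>u v. u + v = 1 \<Longrightarrow> u *\<^sub>R z + v *\<^sub>R y \<in> affine hull F"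
      using affine_affine_hull[of F] zA yA unfolding affine_def by blast
    from this[of "1 + d" "- d"] show ?thesis by (simp add: w_def)
  qed
  moreover have "w \<in> ball z e"
  proof -
    have "z - w = d *\<^sub>R (y - z)" by (simp add: w_def algebra_simps)
    hence "dist z w = d * norm (z - y)"
      using d0 by (simp add: dist_norm norm_minus_commute)
    thus ?thesis using dn by simp
  qed
  ultimately have wF: "w \<in> F" using e by auto
  have Tw: "T w = - d *\<^sub>R T y" using Tz by (simp add: w_def L.diff L.scaleR)
  from assms(3) wF yF have "norm (T w + T y) = norm (T w) + norm (T y)"
    by (auto simp: TEA_pair_def)
  hence "norm ((1 - d) *\<^sub>R T y) = norm (d *\<^sub>R T y) + norm (T y)"
    by (simp add: Tw algebra_simps)
  hence "(1 - d) * norm (T y) = d * norm (T y) + norm (T y)"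
    using d0 d1 by simp
  hence "d * norm (T y) = 0" by (simp add: algebra_simps)
  thus False using d0 Ty by simp
qed

end
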